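(* Let $k\ge 2$ and $l\geq 3$ be integers and $n=2^k$. Then $a_{(l-1)2^{k-1},\,l2^{k-2}+1}+a_{(l-1)2^{k-1},\,l2^{k-2}-2^{k-1}+1}\equiv 0\pmod{2^l}$.
   Context: Let $D:\mathbb{Z}^n\to\mathbb{Z}^n$, $D(x_1,\dots,x_n)=(x_1+x_2,x_2+x_3,\dots,x_n+x_1)$. For integers $r\ge 0$ and $1\le s\le n$, define the integers $a_{r,s}$ by $D^r(0,0,\dots,0,1)=(a_{r,n},a_{r,n-1},\dots,a_{r,1})$; equivalently, $a_{r,s}$ is the coefficient of $x_s$ in the first coordinate of $D^r(x_1,\dots,x_n)$. The second index is read modulo $n$ (representatives $1,\dots,n$). *)

theory Defs
  imports Main "HOL-Number_Theory.Cong"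
begin

text \<open>Vectors in Z^n are represented as functions nat => int, the coordinates
  being indexed by 1..n (values outside 1..n are irrelevant).\<close>

definition D :: "nat \<Rightarrow> (nat \<Rightarrow> int) \<Rightarrow> (nat \<Rightarrow> int)" where
  "D n x = (\<lambda>i. x i + x (if i = n then 1 else i + 1))"

definition unit_vec :: "nat \<Rightarrow> int \<Rightarrow> (nat \<Rightarrow> int)" where
  "unit_vec n s = (\<lambda>i. if int i mod int n = s mod int n then 1 else 0)"

text \<open>a_{r,s}: the coefficient of x_s in the first coordinate of D^r(x),
  i.e. the first coordinate of D^r(e_s) (D is linear).\<close>
definition a :: "nat \<Rightarrow> nat \<Rightarrow> int \<Rightarrow> int" where
  "a n r s = (D n ^^ r) (unit_vec n s) 1"

end

theory Submission imports Defs "HOL-Number_Theory.Cong" "HOL-Computational_Algebra.Polynomial" begin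

lemma two_poly: "(2::int poly) = [:2:]"
  by (metis of_int_numeral of_int_poly)
lemma pow2_poly: "(2::int poly)^l * G = smult (2^l) G"
proof -
  have "(2::int poly)^l = [:2^l:]" by (induction l) (auto simp: two_poly)
  then show ?thesis by simp
qed

lemma freshman: "\<exists>R::int poly. [:1,1:]^(2^(j+1)) = 1 + [:0,1:]^(2^(j+1)) + 2*[:0,1:]^(2^j) + 4*R"
proof (induction j)
  case 0
  show ?case by (rule exI[of _ 0]) (simp add: power2_eq_square one_pCons two_poly)
next
  case (Suc j)
  then obtain R where R: "[:1,1:]^(2^(j+1)) = 1 + [:0,1:]^(2^(j+1)) + 2*[:0,1:]^(2^j) + 4*(R::int poly)" by blast
  define Z :: "int poly" where "Z = [:0,1:]^(2^j)"
  have e1: "[:0,1:]^(2^(j+1)) = Z^2" by (simp add: Z_def power_mult[symmetric] mult.commute)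
  have e2: "[:0,1:]^(2^(Suc j+1)) = Z^4" by (simp add: Z_def power_mult[symmetric] mult.commute)
  have e3: "[:1,1:]^(2^(Suc j+1)) = ([:1,1:]^(2^(j+1)))^2" by (simp add: power_mult[symmetric] mult.commute)
  have e4: "[:0,1:]^(2^(Suc j)) = Z^2" using e1 by simp
  have fin: "[:1,1:]^(2^(Suc j+1)) = 1 + Z^4 + 2*Z^2 + 4*(Z+Z^2+Z^3 + 2*R*(1+Z)^2 + 4*R^2)"
    unfolding e3 R e1 Z_def[symmetric] by algebra
  show ?case unfolding e2 e4 using fin by blast
qed

lemma key_poly:
  assumes "l \<ge> 3"
  shows "\<exists>G K. [:1,1:]^((l-1)*2^(j+1)) * (1 + [:0,1:]^(2^(j+1))) =
     smult (2^l) G + ([:0,1:]^(2^(j+2)) - 1) * (K::int poly)"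
proof -
  obtain R where R: "[:1,1:]^(2^(j+1)) = 1 + [:0,1:]^(2^(j+1)) + 2*[:0,1:]^(2^j) + 4*(R::int poly)"
    using freshman by blast
  define Y :: "int poly" where "Y = [:0,1:]^(2^j)"
  have e1: "[:0,1:]^(2^(j+1)) = Y^2" by (simp add: Y_def power_mult[symmetric] mult.commute)
  have e2: "[:0,1:]^(2^(j+2)) = Y^4" by (simp add: Y_def power_mult[symmetric] mult.commute)
  define A where "A = 1 + Y^2 + 2*Y + 4*R"
  define B where "B = 1 + Y^2"
  define Q where "Q = 1 + Y + 2*R"
  define d where "d = Y^4 - 1"
  have eA0: "[:1,1:]^(2^(j+1)) = A" using R unfolding e1 Y_def[symmetric] A_def by simp
  have eA: "[:1,1:]^((l-1)*2^(j+1)) = A^(l-1)"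
    unfolding eA0[symmetric] by (simp add: power_mult[symmetric] mult.commute)
  have AB: "A*B - 2*Q*B = d" unfolding A_def B_def Q_def d_def by algebra
  have it: "d dvd (A^i*B - 2^i*Q^i*B)" for i
  proof (induction i)
    case 0 then show ?case by simp
  next
    case (Suc i)
    have "A^Suc i*B - 2^Suc i*Q^Suc i*B = A*(A^i*B - 2^i*Q^i*B) + 2^i*Q^i*(A*B - 2*Q*B)"
      unfolding power_Suc by algebra
    then show ?case using Suc AB by (simp add: dvd_add)
  qed
  define W where "W = (1+Y+Y^2+Y^3) + 2*R*(1+Y)*B + 2*R^2*B"
  have QB: "Q^2*B = 2*W + d" unfolding Q_def B_def W_def d_def by algebra
  obtain K1 where K1: "A^(l-1)*B - 2^(l-1)*Q^(l-1)*B = d*K1" using it by blast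
  have l1: "l - 1 = Suc (Suc (l-3))" using assms by simp
  have l2: "l = Suc (Suc (Suc (l-3)))" using assms by simp
  have "A^(l-1)*B = 2^l*(Q^(l-3)*W) + d*(K1 + 2^(l-1)*Q^(l-3))"
  proof -
    have "A^(l-1)*B = 2^(l-1)*Q^(l-3)*(Q^2*B) + d*K1"
      using K1 unfolding l1 by (simp add: algebra_simps power2_eq_square)
    also have "\<dots> = 2^(l-1)*Q^(l-3)*(2*W + d) + d*K1" by (simp add: QB)
    also have "\<dots> = 2^l*(Q^(l-3)*W) + d*(K1 + 2^(l-1)*Q^(l-3))"
      by (subst (2) l2, unfold l1) (simp add: algebra_simps)
    finally show ?thesis .
  qed
  then show ?thesis unfolding eA e1 e2 B_def[symmetric] d_def[symmetric] pow2_poly by blast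
qed

definition cyc :: "nat \<Rightarrow> int \<Rightarrow> int poly \<Rightarrow> int" where
  "cyc n t p = (\<Sum>j\<le>degree p. if int j mod int n = t mod int n then coeff p j else 0)"

lemma cyc_bound: "degree p \<le> N \<Longrightarrow>
   cyc n t p = (\<Sum>j\<le>N. if int j mod int n = t mod int n then coeff p j else 0)"
  unfolding cyc_def by (rule sum.mono_neutral_left) (auto simp: coeff_eq_0)

lemma cyc_add: "cyc n t (p + q) = cyc n t p + cyc n t q"
proof -
  define N where "N = max (degree p) (degree q)"
  have "degree (p+q) \<le> N" unfolding N_def by (rule degree_add_le) auto
  then show ?thesis
    using cyc_bound[of p N] cyc_bound[of q N] cyc_bound[of "p+q" N]
    by (simp add: N_def sum.distrib[symmetric] if_distrib) (auto intro!: sum.cong)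
qed

lemma cyc_smult: "cyc n t (smult c p) = c * cyc n t p"
proof -
  have d: "degree (smult c p) \<le> degree p" by (rule degree_smult_le)
  show ?thesis unfolding cyc_bound[OF d] cyc_bound[of p "degree p", OF order_refl]
    by (auto simp: sum_distrib_left intro!: sum.cong)
qed

lemma cyc_uminus: "cyc n t (- p) = - cyc n t p"
  using cyc_smult[of n t "-1" p] by simp

lemma cyc_diff: "cyc n t (p - q) = cyc n t p - cyc n t q"
  using cyc_add[of n t p "-q"] cyc_uminus[of n t q] by simp

lemma sum_split_shift: "(\<Sum>j\<le>m+(N::nat). g j) = (\<Sum>j<m. g j) + (\<Sum>i\<le>N. g (i+m))"
  by (induction N) (simp_all add: lessThan_Suc_atMost[symmetric] ac_simps)

lemma cyc_shift: "cyc n t (monom 1 m * p) = cyc n (t - int m) p"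
proof -
  have dg: "degree (monom 1 m * p) \<le> m + degree p"
    by (metis add_le_mono1 degree_monom_le degree_mult_le order_trans)
  have c: "(int (i+m) mod int n = t mod int n) = (int i mod int n = (t - int m) mod int n)" for i
    by (simp add: mod_eq_dvd_iff algebra_simps)
  have "cyc n t (monom 1 m * p) = (\<Sum>j\<le>m + degree p. if int j mod int n = t mod int n then coeff (monom 1 m * p) j else 0)"
    by (rule cyc_bound[OF dg])
  also have "\<dots> = (\<Sum>j<m. if int j mod int n = t mod int n then coeff (monom 1 m * p) j else 0)
     + (\<Sum>i\<le>degree p. if int (i+m) mod int n = t mod int n then coeff (monom 1 m * p) (i+m) else 0)"
    by (rule sum_split_shift)
  also have "(\<Sum>j<m. if int j mod int n = t mod int n then coeff (monom 1 m * p) j else 0) = 0"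
    by (rule sum.neutral) (auto simp: coeff_monom_mult)
  also have "(\<Sum>i\<le>degree p. if int (i+m) mod int n = t mod int n then coeff (monom 1 m * p) (i+m) else 0)
     = cyc n (t - int m) p"
    unfolding cyc_def c by (rule sum.cong) (auto simp: coeff_monom_mult)
  finally show ?thesis by simp
qed

lemma cyc_period: "cyc n t (monom 1 n * p) = cyc n t p"
  using cyc_shift[of n t n p] by (simp add: cyc_def)

lemma cyc_multiple: "cyc n t ((monom 1 n - 1) * K) = 0"
proof -
  have "(monom 1 n - 1) * K = monom 1 n * K - K" by (simp add: algebra_simps)
  then show ?thesis by (simp add: cyc_diff cyc_period)
qed

lemma pascal: "(\<Sum>j\<le>r. int (r choose j) * (f j + f (Suc j))) = (\<Sum>j\<le>Suc r. int (Suc r choose j) * (f j::int))"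
proof -
  have h1: "(\<Sum>j\<le>r. int (r choose j) * f j) = f 0 + (\<Sum>j\<le>r. int (r choose Suc j) * f (Suc j))"
  proof -
    have "(\<Sum>j\<le>r. int (r choose j) * f j) = (\<Sum>j\<le>Suc r. int (r choose j) * f j)" by simp
    also have "\<dots> = f 0 + (\<Sum>j\<le>r. int (r choose Suc j) * f (Suc j))"
      by (subst sum.atMost_Suc_shift) simp
    finally show ?thesis .
  qed
  have h2: "(\<Sum>j\<le>Suc r. int (Suc r choose j) * f j) = f 0 + (\<Sum>j\<le>r. (int (r choose j) + int (r choose Suc j)) * f (Suc j))"
    by (subst sum.atMost_Suc_shift) simp
  have "(\<Sum>j\<le>r. int (r choose j) * (f j + f (Suc j))) = (\<Sum>j\<le>r. int (r choose j) * f j) + (\<Sum>j\<le>r. int (r choose j) * f (Suc j))"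
    by (simp add: distrib_left sum.distrib)
  also have "\<dots> = f 0 + (\<Sum>j\<le>r. int (r choose Suc j) * f (Suc j)) + (\<Sum>j\<le>r. int (r choose j) * f (Suc j))"
    using h1 by simp
  also have "\<dots> = (\<Sum>j\<le>Suc r. int (Suc r choose j) * f j)"
    unfolding h2 by (simp add: distrib_right sum.distrib)
  finally show ?thesis .
qed

lemma D_mod: "0 < n \<Longrightarrow> D n x (Suc (q mod n)) = x (Suc (q mod n)) + x (Suc (Suc q mod n))"
  unfolding D_def by (auto simp: mod_Suc)

lemma Dpow: "0 < n \<Longrightarrow> (D n ^^ r) x (i mod n + 1) = (\<Sum>j\<le>r. int (r choose j) * x ((i + j) mod n + 1))"
proof (induction r arbitrary: x)
  case 0 then show ?case by simp
next
  case (Suc r)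
  have "(D n ^^ Suc r) x (i mod n + 1) = (D n ^^ r) (D n x) (i mod n + 1)"
    by (simp add: funpow_Suc_right del: funpow.simps)
  also have "\<dots> = (\<Sum>j\<le>r. int (r choose j) * (x ((i+j) mod n + 1) + x ((i + Suc j) mod n + 1)))"
    using Suc by (simp add: D_mod)
  also have "\<dots> = (\<Sum>j\<le>Suc r. int (Suc r choose j) * x ((i + j) mod n + 1))"
    by (rule pascal)
  finally show ?case .
qed

lemma a_cyc: "0 < n \<Longrightarrow> a n r s = cyc n (s - 1) ([:1,1:]^r)"
proof -
  assume n: "0 < n"
  have c: "(int (j mod n + 1) mod int n = s mod int n) = (int j mod int n = (s - 1) mod int n)" for j
  proof -
    have "int (j mod n + 1) = int j mod int n + 1" by (simp add: of_nat_mod)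
    moreover have "(int j mod int n + 1) mod int n = (int j + 1) mod int n"
      by (rule mod_add_left_eq)
    ultimately have e: "int (j mod n + 1) mod int n = (int j + 1) mod int n"
      by (simp only:)
    show ?thesis by (subst e, unfold mod_eq_dvd_iff) (simp add: algebra_simps)
  qed
  have "a n r s = (D n ^^ r) (unit_vec n s) (0 mod n + 1)" unfolding a_def by simp
  also have "\<dots> = (\<Sum>j\<le>r. int (r choose j) * unit_vec n s (j mod n + 1))"
    using Dpow[OF n, of r "unit_vec n s" 0] by simp
  also have "\<dots> = cyc n (s - 1) ([:1,1:]^r)"
    unfolding cyc_def degree_linear_power unit_vec_def c
    by (auto intro!: sum.cong simp: coeff_linear_poly_power)
  finally show ?thesis .
qed

theorem lemma4p7:
  fixes k l :: nat
  assumes "k \<ge> 2" and "l \<ge> 3"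
  shows "[a (2^k) ((l - 1) * 2^(k-1)) (int l * 2^(k-2) + 1)
          + a (2^k) ((l - 1) * 2^(k-1)) (int l * 2^(k-2) - 2^(k-1) + 1) = 0] (mod 2^l)"
proof -
  obtain j where kj: "k = j + 2" using assms(1) by (metis add.commute le_Suc_ex)
  define t :: int where "t = int l * 2^(k-2)"
  define P :: "int poly" where "P = [:1,1:]^((l - 1) * 2^(k-1))"
  obtain G K where GK: "P * (1 + [:0,1:]^(2^(j+1))) = smult (2^l) G + ([:0,1:]^(2^(j+2)) - 1) * K"
    using key_poly[OF assms(2), of j] unfolding P_def kj by auto
  have m: "(2::int)^(k-1) = int (2^(j+1))" using kj by simp
  have "a (2^k) ((l - 1) * 2^(k-1)) (t + 1) + a (2^k) ((l - 1) * 2^(k-1)) (t - 2^(k-1) + 1)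
      = cyc (2^k) t P + cyc (2^k) (t - int (2^(j+1))) P"
    unfolding P_def m by (simp add: a_cyc)
  also have "\<dots> = cyc (2^k) t (P * (1 + [:0,1:]^(2^(j+1))))"
    using cyc_shift[of "2^k" t "2^(j+1)" P]
    by (simp add: cyc_add algebra_simps monom_altdef)
  also have "\<dots> = 2^l * cyc (2^k) t G"
    unfolding GK cyc_add cyc_smult using cyc_multiple[of "2^k" t K]
    by (simp add: kj monom_altdef)
  finally show ?thesis unfolding t_def by (simp add: cong_0_iff)
qed

end
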